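(* Let $n\ge1$, let $p$ be a prime, and let $L(\mathbf{X})=\sum_{i,j=1}^n a_{ij}x_{ij}\in\mathbb{Z}[\mathbf{X}]$ be a linear form in the $n^2$ variables $\mathbf{X}=(x_{ij})_{i,j=1}^n$ which does not vanish modulo $p$ (i.e. not all $a_{ij}$ are divisible by $p$). Then \[ S_{p^2}(L)=\sum_{\substack{\mathbf{X}\in\mathbb{Z}_{p^2}^{n\times n}\\ \det\mathbf{X}\equiv0 \bmod p^2}}\exp\left(2\pi i\,L(\mathbf{X})/p^2\right)\ll p^{2n^2-(n+3)/2}, \] where the implied constant depends only on $n$.
   Context: $\mathbb{Z}_{m}$ denotes the residue ring modulo $m$, represented by $\{0,\dots,m-1\}$. *)

theory Defs
  imports Complex_Main "HOL-Combinatorics.Permutations" "HOL-Computational_Algebra.Primes"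
begin

definition det_n :: "nat \<Rightarrow> (nat \<times> nat \<Rightarrow> int) \<Rightarrow> int" where
  "det_n n X = (\<Sum>\<sigma> | \<sigma> permutes {..<n}. sign \<sigma> * (\<Prod>i<n. X (i, \<sigma> i)))"

definition S_sum :: "nat \<Rightarrow> nat \<Rightarrow> (nat \<times> nat \<Rightarrow> int) \<Rightarrow> complex" where
  "S_sum n p a = (\<Sum>X \<in> {X \<in> ({..<n} \<times> {..<n}) \<rightarrow>\<^sub>E {0..<int p ^ 2}. int p ^ 2 dvd det_n n X}.
      exp (2 * pi * \<i> * of_int (\<Sum>ij \<in> {..<n} \<times> {..<n}. a ij * X ij) / of_nat (p ^ 2)))"

end

theory Submission
  imports Defs "HOL-Analysis.Complex_Transcendental"
begin

definition upd_row :: "nat \<Rightarrow> (nat \<times> nat \<Rightarrow> int) \<Rightarrow> (nat \<Rightarrow> int) \<Rightarrow> nat \<times> nat \<Rightarrow> int" where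
  "upd_row i X r = (\<lambda>(j,l). if j = i then r l else X (j,l))"

definition cof :: "nat \<Rightarrow> nat \<Rightarrow> (nat \<times> nat \<Rightarrow> int) \<Rightarrow> nat \<Rightarrow> int" where
  "cof n i X k = det_n n (upd_row i X (\<lambda>l. if l = k then 1 else 0))"

lemma det_cong:
  assumes "\<And>j l. j < n \<Longrightarrow> l < n \<Longrightarrow> X (j,l) = Y (j,l)"
  shows "det_n n X = det_n n Y"
  unfolding det_n_def
proof (rule sum.cong[OF refl])
  fix \<sigma> assume "\<sigma> \<in> {\<sigma>. \<sigma> permutes {..<n}}"
  then have s: "\<sigma> permutes {..<n}" by simp
  show "sign \<sigma> * (\<Prod>i<n. X (i, \<sigma> i)) = sign \<sigma> * (\<Prod>i<n. Y (i, \<sigma> i))"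
    using assms permutes_in_image[OF s] by (intro arg_cong[where f="\<lambda>t. sign \<sigma> * t"] prod.cong) auto
qed

lemma prod_upd_row:
  assumes "i < n"
  shows "(\<Prod>j<n. upd_row i X r (j, \<sigma> j)) = r (\<sigma> i) * (\<Prod>j\<in>{..<n}-{i}. X (j, \<sigma> j))"
proof -
  have "(\<Prod>j<n. upd_row i X r (j, \<sigma> j)) = upd_row i X r (i, \<sigma> i) * (\<Prod>j\<in>{..<n}-{i}. upd_row i X r (j, \<sigma> j))"
    using assms by (subst prod.remove[of _ i]) auto
  also have "(\<Prod>j\<in>{..<n}-{i}. upd_row i X r (j, \<sigma> j)) = (\<Prod>j\<in>{..<n}-{i}. X (j, \<sigma> j))"
    by (rule prod.cong) (auto simp: upd_row_def)
  finally show ?thesis by (simp add: upd_row_def)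
qed

lemma det_row_linear:
  assumes "i < n"
  shows "det_n n (upd_row i X r) = (\<Sum>k<n. r k * cof n i X k)"
proof -
  let ?P = "\<lambda>\<sigma>. (\<Prod>j\<in>{..<n}-{i}. X (j, \<sigma> j))"
  let ?S = "{\<sigma>. \<sigma> permutes {..<n}}"
  have "(\<Sum>k<n. r k * cof n i X k) = (\<Sum>k<n. \<Sum>\<sigma>\<in>?S. r k * (sign \<sigma> * ((if \<sigma> i = k then 1 else 0) * ?P \<sigma>)))"
    unfolding cof_def det_n_def using assms by (simp add: prod_upd_row sum_distrib_left)
  also have "\<dots> = (\<Sum>\<sigma>\<in>?S. \<Sum>k<n. r k * (sign \<sigma> * ((if \<sigma> i = k then 1 else 0) * ?P \<sigma>)))"
    by (rule sum.swap)
  also have "\<dots> = (\<Sum>\<sigma>\<in>?S. sign \<sigma> * (r (\<sigma> i) * ?P \<sigma>))"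
  proof (rule sum.cong[OF refl])
    fix \<sigma> assume "\<sigma> \<in> ?S"
    then have "\<sigma> i < n" using permutes_in_image[of \<sigma> "{..<n}" i] assms by auto
    show "(\<Sum>k<n. r k * (sign \<sigma> * ((if \<sigma> i = k then 1 else 0) * ?P \<sigma>))) = sign \<sigma> * (r (\<sigma> i) * ?P \<sigma>)"
    proof -
      have "\<And>k. r k * (sign \<sigma> * ((if \<sigma> i = k then 1 else 0) * ?P \<sigma>)) = (if k = \<sigma> i then r (\<sigma> i) * (sign \<sigma> * ?P \<sigma>) else 0)"
        by auto
      then show ?thesis using \<open>\<sigma> i < n\<close> by (simp add: sum.delta' algebra_simps)
    qed
  qed
  also have "\<dots> = det_n n (upd_row i X r)"
    unfolding det_n_def using assms by (simp add: prod_upd_row)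
  finally show ?thesis by simp
qed

lemma det_eq_rows:
  assumes "i < n" "m < n" "i \<noteq> m" "\<And>l. l < n \<Longrightarrow> X (i,l) = X (m,l)"
  shows "det_n n X = 0"
proof -
  let ?t = "Transposition.transpose i m"
  let ?S = "{\<sigma>. \<sigma> permutes {..<n}}"
  let ?f = "\<lambda>\<sigma>. sign \<sigma> * (\<Prod>j<n. X (j, \<sigma> j))"
  have tp: "?t permutes {..<n}" using assms by (intro permutes_swap_id) auto
  have "det_n n X = (\<Sum>\<sigma>\<in>?S. ?f (\<sigma> \<circ> ?t))"
    unfolding det_n_def by (rule sum_permutations_compose_right[OF tp])
  also have "\<dots> = (\<Sum>\<sigma>\<in>?S. - ?f \<sigma>)"
  proof (rule sum.cong[OF refl])
    fix \<sigma> assume "\<sigma> \<in> ?S"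
    then have s: "\<sigma> permutes {..<n}" by simp
    have sg: "sign (\<sigma> \<circ> ?t) = - sign \<sigma>"
      proof -
      have "permutation \<sigma>" "permutation ?t" using s tp by (auto intro: permutes_imp_permutation)
      then show ?thesis using assms(3) by (simp add: sign_compose sign_swap_id)
    qed
    have "(\<Prod>j<n. X (j, (\<sigma> \<circ> ?t) j)) = (\<Prod>j<n. X (?t j, \<sigma> (?t j)))"
    proof (rule prod.cong[OF refl])
      fix j assume j: "j \<in> {..<n}"
      have "\<sigma> (?t j) < n" using permutes_in_image[OF s] permutes_in_image[OF tp] j by auto
      then show "X (j, (\<sigma> \<circ> ?t) j) = X (?t j, \<sigma> (?t j))"
        using assms by (cases "j = i"; cases "j = m") (auto simp: transpose_apply_other)
    qed
    also have "\<dots> = (\<Prod>j<n. X (j, \<sigma> j))"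
      using prod.permute[OF tp, of "\<lambda>j. X (j, \<sigma> j)"] by (simp add: comp_def)
    finally show "?f (\<sigma> \<circ> ?t) = - ?f \<sigma>" using sg by simp
  qed
  also have "\<dots> = - det_n n X" unfolding det_n_def by (simp add: sum_negf)
  finally show ?thesis by simp
qed


definition E :: "nat \<Rightarrow> int \<Rightarrow> complex" where
  "E N m = exp (2 * pi * \<i> * of_int m / of_nat N)"

lemma E_add: "E N (x + y) = E N x * E N y"
  unfolding E_def by (simp add: exp_add[symmetric] add_divide_distrib distrib_left)

lemma E_dvd: assumes "N > 0" "int N dvd m" shows "E N m = 1"
proof -
  obtain k where k: "m = int N * k" using assms by (auto elim: dvdE)
  have "2 * pi * \<i> * of_int m / of_nat N = (2 * of_int k * pi) * \<i>"
    using assms by (simp add: k field_simps)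
  moreover have "exp ((2 * of_int k * pi) * \<i>) = 1" by (rule exp_integer_2pi) simp
  ultimately show ?thesis unfolding E_def by simp
qed

lemma E_eq_1: assumes "N > 0" "E N m = 1" shows "int N dvd m"
proof -
  from assms have "exp (2 * pi * \<i> * of_int m / of_nat N) = 1" by (simp add: E_def)
  then obtain k :: int where k: "Im (2 * pi * \<i> * of_int m / of_nat N) = of_int (2 * k) * pi"
    unfolding exp_eq_1 by blast
  have "Im (2 * pi * \<i> * of_int m / of_nat N) = 2 * pi * of_int m / real N"
    by (simp add: Im_divide_of_nat)
  with k have "2 * pi * of_int m / real N = 2 * of_int k * pi" by simp
  then have "real_of_int m = real N * of_int k" using assms pi_gt_zero
    by (simp add: field_simps)
  then have "m = int N * k" by (metis of_int_eq_iff of_int_mult of_int_of_nat_eq)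
  then show ?thesis by simp
qed

lemma norm_E: "norm (E N m) = 1"
proof -
  have "2 * pi * \<i> * of_int m / of_nat N = \<i> * complex_of_real (2 * pi * of_int m / real N)"
    by simp
  then show ?thesis unfolding E_def by (simp only: norm_exp_i_times)
qed

lemma E_mod: assumes "N > 0" "int N dvd (x - y)" shows "E N x = E N y"
proof -
  have "E N x = E N (y + (x - y))" by simp
  also have "\<dots> = E N y * E N (x - y)" by (rule E_add)
  also have "\<dots> = E N y" using E_dvd[OF assms] by simp
  finally show ?thesis .
qed

lemma sum_shift_zero:
  fixes f :: "'a \<Rightarrow> complex"
  assumes "finite F" "s ` F \<subseteq> F" "inj_on s F" "\<And>x. x \<in> F \<Longrightarrow> f (s x) = c * f x" "c \<noteq> 1"
  shows "sum f F = 0"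
proof -
  have "sum f F = sum f (s ` F)" using endo_inj_surj[OF assms(1-3)] by simp
  also have "\<dots> = sum (f \<circ> s) F" using sum.reindex[OF assms(3)] by simp
  also have "\<dots> = c * sum f F" using assms(4) by (simp add: sum_distrib_left)
  finally have "(c - 1) * sum f F = 0" by (simp add: algebra_simps)
  with assms(5) show ?thesis by simp
qed

lemma eq_mod_range:
  fixes x y M :: int
  assumes "0 \<le> x" "x < M" "0 \<le> y" "y < M" "M dvd x - y"
  shows "x = y"
proof -
  have "x mod M = y mod M" using assms(5) by (simp add: mod_eq_dvd_iff)
  then show ?thesis using assms by simp
qed

lemma lin_unique:
  fixes c x x' :: "nat \<Rightarrow> int" and M :: int
  assumes "k1 < n" "\<And>k. k < n \<Longrightarrow> k \<noteq> k1 \<Longrightarrow> x k = x' k"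
    "M dvd (\<Sum>k<n. c k * x k)" "M dvd (\<Sum>k<n. c k * x' k)" "coprime (c k1) M"
    "0 \<le> x k1" "x k1 < M" "0 \<le> x' k1" "x' k1 < M"
  shows "x k1 = x' k1"
proof -
  have "(\<Sum>k<n. c k * x k) - (\<Sum>k<n. c k * x' k) = (\<Sum>k<n. c k * (x k - x' k))"
    by (simp add: sum_subtractf algebra_simps)
  also have "\<dots> = (\<Sum>k<n. if k = k1 then c k1 * (x k1 - x' k1) else 0)"
    using assms(2) by (intro sum.cong) auto
  also have "\<dots> = c k1 * (x k1 - x' k1)" using assms(1) by simp
  finally have "M dvd c k1 * (x k1 - x' k1)" using assms(3,4) by (metis dvd_diff)
  then have "M dvd x k1 - x' k1" using assms(5) coprime_dvd_mult_right_iff coprime_commute by blast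
  then show ?thesis using assms(6-9) eq_mod_range by blast
qed


definition box :: "nat \<Rightarrow> nat \<Rightarrow> (nat \<times> nat \<Rightarrow> int) set" where
  "box n p = ({..<n} \<times> {..<n}) \<rightarrow>\<^sub>E {0..<int p ^ 2}"
definition Lf :: "nat \<Rightarrow> (nat \<times> nat \<Rightarrow> int) \<Rightarrow> (nat \<times> nat \<Rightarrow> int) \<Rightarrow> int" where
  "Lf n a X = (\<Sum>ij \<in> {..<n} \<times> {..<n}. a ij * X ij)"
definition Dset :: "nat \<Rightarrow> nat \<Rightarrow> (nat \<times> nat \<Rightarrow> int) set" where
  "Dset n p = {X \<in> box n p. int p ^ 2 dvd det_n n X}"
definition sh :: "nat \<Rightarrow> nat \<Rightarrow> nat \<Rightarrow> (nat \<Rightarrow> int) \<Rightarrow> (nat \<times> nat \<Rightarrow> int) \<Rightarrow> (nat \<times> nat \<Rightarrow> int)" where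
  "sh n p i h X = upd_row i X (\<lambda>l. if l < n then (X (i,l) + h l) mod (int p ^ 2) else X (i,l))"
definition gr :: "nat \<Rightarrow> nat \<Rightarrow> (nat \<times> nat \<Rightarrow> int) \<Rightarrow> (nat \<times> nat \<Rightarrow> int)" where
  "gr n i X = restrict X (({..<n} - {i}) \<times> {..<n})"
definition fib :: "nat \<Rightarrow> nat \<Rightarrow> nat \<Rightarrow> (nat \<times> nat \<Rightarrow> int) \<Rightarrow> (nat \<times> nat \<Rightarrow> int) set" where
  "fib n p i y = {X \<in> Dset n p. gr n i X = y}"

lemma finite_box: "finite (box n p)"
  unfolding box_def by (intro finite_PiE) auto

lemma gr_eq: "gr n i X = gr n i Y \<Longrightarrow> j < n \<Longrightarrow> j \<noteq> i \<Longrightarrow> l < n \<Longrightarrow> X (j,l) = Y (j,l)"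
  unfolding gr_def by (drule fun_cong[of _ _ "(j,l)"]) auto

lemma cof_gr: "gr n i X = gr n i Y \<Longrightarrow> cof n i X k = cof n i Y k"
  unfolding cof_def by (rule det_cong) (auto simp: upd_row_def dest: gr_eq)

lemma gr_sh: "gr n i (sh n p i h X) = gr n i X"
  unfolding gr_def sh_def upd_row_def by (auto simp: restrict_def fun_eq_iff)

lemma det_as_row: "i < n \<Longrightarrow> det_n n X = (\<Sum>k<n. X (i,k) * cof n i X k)"
proof -
  assume i: "i < n"
  have "upd_row i X (\<lambda>l. X (i,l)) = X" by (auto simp: upd_row_def fun_eq_iff)
  then show ?thesis using det_row_linear[OF i, of X "\<lambda>l. X (i,l)"] by simp
qed

definition Good :: "nat \<Rightarrow> nat \<Rightarrow> nat \<Rightarrow> (nat \<times> nat \<Rightarrow> int) \<Rightarrow> (nat \<times> nat \<Rightarrow> int) set" where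
  "Good n p i a = {y \<in> (({..<n} - {i}) \<times> {..<n}) \<rightarrow>\<^sub>E {0..<int p ^ 2}.
     \<forall>m<n. m \<noteq> i \<longrightarrow> int p ^ 2 dvd (\<Sum>k<n. a (i,k) * y (m,k))}"

lemma dvd_mod_sub: "(M::int) dvd x mod M - x"
  by (subst mod_eq_dvd_iff[symmetric]) simp

context
  fixes n p :: nat and i :: nat
  assumes p: "prime p" and i: "i < n"
begin

lemma Mpos: "int p ^ 2 > 0" using p prime_gt_0_nat by simp

lemma sh_box: "X \<in> box n p \<Longrightarrow> sh n p i h X \<in> box n p"
  using Mpos i unfolding box_def sh_def upd_row_def by (auto simp: PiE_def extensional_def Pi_def)

lemma sh_inj: "inj_on (sh n p i h) (box n p)"
proof (rule inj_onI)
  fix X Y assume X: "X \<in> box n p" and Y: "Y \<in> box n p" and e: "sh n p i h X = sh n p i h Y"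
  show "X = Y"
  proof (rule ext, clarify)
    fix j l
    show "X (j,l) = Y (j,l)"
    proof (cases "j = i \<and> l < n")
      case True
      then have "(X (i,l) + h l) mod (int p ^ 2) = (Y (i,l) + h l) mod (int p ^ 2)"
        using fun_cong[OF e, of "(i,l)"] by (simp add: sh_def upd_row_def)
      then have "int p ^ 2 dvd X (i,l) - Y (i,l)"
        by (metis add_diff_cancel_right mod_eq_dvd_iff)
      moreover have "X (i,l) \<in> {0..<int p ^ 2}" "Y (i,l) \<in> {0..<int p ^ 2}"
        using X Y True i unfolding box_def by (auto simp: PiE_def Pi_def)
      ultimately show ?thesis using True eq_mod_range by auto
    next
      case False
      then show ?thesis using fun_cong[OF e, of "(j,l)"] by (cases "j = i") (auto simp: sh_def upd_row_def)
    qed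
  qed
qed

lemma det_sh: "int p ^ 2 dvd det_n n (sh n p i h X) - det_n n X - (\<Sum>k<n. h k * cof n i X k)"
proof -
  let ?M = "int p ^ 2"
  let ?r = "\<lambda>l. if l < n then (X (i,l) + h l) mod ?M else X (i,l)"
  have "cof n i (upd_row i X ?r) k = cof n i X k" for k
    unfolding cof_def by (rule arg_cong[where f="det_n n"]) (auto simp: upd_row_def fun_eq_iff)
  have "det_n n (sh n p i h X) - det_n n X - (\<Sum>k<n. h k * cof n i X k)
      = (\<Sum>k<n. (?r k - (X (i,k) + h k)) * cof n i X k)"
    unfolding sh_def det_row_linear[OF i] det_as_row[OF i, of X]
    by (simp add: sum_subtractf[symmetric] algebra_simps)
  also have "?M dvd \<dots>"
    by (intro dvd_sum dvd_mult2) (simp add: dvd_mod_sub)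
  finally show ?thesis .
qed

lemma L_sh: "int p ^ 2 dvd Lf n a (sh n p i h X) - Lf n a X - (\<Sum>k<n. a (i,k) * h k)"
proof -
  let ?M = "int p ^ 2"
  let ?q = "\<lambda>l. (X (i,l) + h l) mod ?M - X (i,l)"
  have "Lf n a (sh n p i h X) - Lf n a X = (\<Sum>jl\<in>{..<n} \<times> {..<n}. a jl * (sh n p i h X jl - X jl))"
    unfolding Lf_def by (simp add: sum_subtractf[symmetric] algebra_simps)
  also have "\<dots> = (\<Sum>j<n. \<Sum>l<n. a (j,l) * (sh n p i h X (j,l) - X (j,l)))"
    by (simp add: sum.cartesian_product)
  also have "\<dots> = (\<Sum>j<n. if j = i then (\<Sum>l<n. a (i,l) * ?q l) else 0)"
    by (intro sum.cong refl) (auto simp: sh_def upd_row_def)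
  also have "\<dots> = (\<Sum>l<n. a (i,l) * ?q l)" using i by simp
  finally have "Lf n a (sh n p i h X) - Lf n a X - (\<Sum>k<n. a (i,k) * h k)
     = (\<Sum>l<n. a (i,l) * ((X (i,l) + h l) mod ?M - (X (i,l) + h l)))"
    by (simp add: sum_subtractf[symmetric] algebra_simps)
  also have "?M dvd \<dots>"
    by (intro dvd_sum dvd_mult) (rule dvd_mod_sub)
  finally show ?thesis .
qed


lemma fib_zero:
  assumes X0: "X0 \<in> fib n p i y" and hc: "int p ^ 2 dvd (\<Sum>k<n. h k * cof n i X0 k)"
    and ha: "\<not> int p ^ 2 dvd (\<Sum>k<n. a (i,k) * h k)"
  shows "(\<Sum>X\<in>fib n p i y. E (p^2) (Lf n a X)) = 0"
proof (rule sum_shift_zero[where s="sh n p i h" and c="E (p^2) (\<Sum>k<n. a (i,k) * h k)"])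
  show fin: "finite (fib n p i y)"
    by (rule finite_subset[OF _ finite_box[of n p]]) (auto simp: fib_def Dset_def)
  have gX0: "gr n i X0 = y" using X0 by (simp add: fib_def)
  show "sh n p i h ` fib n p i y \<subseteq> fib n p i y"
  proof clarify
    fix X assume X: "X \<in> fib n p i y"
    then have Xb: "X \<in> box n p" and Xd: "int p ^ 2 dvd det_n n X" and gX: "gr n i X = y"
      by (auto simp: fib_def Dset_def)
    have cc: "cof n i X k = cof n i X0 k" for k using cof_gr gX gX0 by metis
    have "det_n n (sh n p i h X) = (det_n n (sh n p i h X) - det_n n X - (\<Sum>k<n. h k * cof n i X k))
       + det_n n X + (\<Sum>k<n. h k * cof n i X0 k)" using cc by simp
    also have "int p ^ 2 dvd \<dots>" using det_sh Xd hc by (intro dvd_add) auto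
    finally show "sh n p i h X \<in> fib n p i y"
      using sh_box[OF Xb] gr_sh gX by (auto simp: fib_def Dset_def)
  qed
  show "inj_on (sh n p i h) (fib n p i y)"
    by (rule inj_on_subset[OF sh_inj]) (auto simp: fib_def Dset_def)
  show "E (p^2) (Lf n a (sh n p i h X)) = E (p^2) (\<Sum>k<n. a (i,k) * h k) * E (p^2) (Lf n a X)" for X
  proof -
    have "E (p^2) (Lf n a (sh n p i h X)) = E (p^2) (Lf n a X + (\<Sum>k<n. a (i,k) * h k))"
      using Mpos L_sh[of a h X] by (intro E_mod) (auto simp: algebra_simps)
    then show ?thesis by (simp add: E_add)
  qed
  show "E (p^2) (\<Sum>k<n. a (i,k) * h k) \<noteq> 1"
    using E_eq_1[of "p^2"] ha Mpos by auto
qed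


lemma coprime_M: "\<not> int p dvd c \<Longrightarrow> coprime c (int p ^ 2)"
proof -
  assume c: "\<not> int p dvd c"
  have "prime (int p)" using p by simp
  then have "coprime (int p) c" using c prime_imp_coprime by blast
  then show ?thesis by (simp add: coprime_commute)
qed

lemma card_pow: "card (S \<rightarrow>\<^sub>E {0..<int p ^ 2}) = (p^2) ^ card S" if "finite S"
proof -
  have "card {0..<int p ^ 2} = p^2" by (simp add: nat_power_eq)
  then show ?thesis using that by (simp add: card_PiE)
qed

lemma fib_card:
  assumes X0: "X0 \<in> fib n p i y" and k1: "k1 < n" and nd: "\<not> int p dvd cof n i X0 k1"
  shows "card (fib n p i y) \<le> (p^2) ^ (n - 1)"
proof -
  let ?Q = "{i} \<times> ({..<n} - {k1})"
  let ?f = "\<lambda>X. restrict X ?Q"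
  have gX0: "gr n i X0 = y" using X0 by (simp add: fib_def)
  have "inj_on ?f (fib n p i y)"
  proof (rule inj_onI)
    fix X Y assume X: "X \<in> fib n p i y" and Y: "Y \<in> fib n p i y" and e: "?f X = ?f Y"
    from X have Xb: "X \<in> box n p" and Xd: "int p ^ 2 dvd det_n n X" and gX: "gr n i X = y"
      by (auto simp: fib_def Dset_def)
    from Y have Yb: "Y \<in> box n p" and Yd: "int p ^ 2 dvd det_n n Y" and gY: "gr n i Y = y"
      by (auto simp: fib_def Dset_def)
    have cX: "cof n i X k = cof n i X0 k" for k using cof_gr gX gX0 by metis
    have cY: "cof n i Y k = cof n i X0 k" for k using cof_gr gY gX0 by metis
    show "X = Y"
    proof (rule ext, clarify)
      fix j l
      show "X (j,l) = Y (j,l)"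
      proof (cases "j < n \<and> l < n")
        case False
        then show ?thesis using Xb Yb unfolding box_def by (auto simp: PiE_def extensional_def)
      next
        case True
        show ?thesis
        proof (cases "j = i")
          case False
          then show ?thesis using True gr_eq gX gY by metis
        next
          case ji: True
          show ?thesis
          proof (cases "l = k1")
            case False
            then show ?thesis using fun_cong[OF e, of "(j,l)"] True ji by auto
          next
            case lk: True
            have "(\<lambda>k. X (i,k)) k1 = (\<lambda>k. Y (i,k)) k1"
            proof (rule lin_unique[where c="cof n i X0" and n=n and M="int p ^ 2"])
              show "k1 < n" by (rule k1)
              show "X (i,k) = Y (i,k)" if "k < n" "k \<noteq> k1" for k
                using fun_cong[OF e, of "(i,k)"] that by auto
              show "int p ^ 2 dvd (\<Sum>k<n. cof n i X0 k * X (i,k))"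
                using Xd det_as_row[OF i, of X] cX by (simp add: mult.commute)
              show "int p ^ 2 dvd (\<Sum>k<n. cof n i X0 k * Y (i,k))"
                using Yd det_as_row[OF i, of Y] cY by (simp add: mult.commute)
              show "coprime (cof n i X0 k1) (int p ^ 2)" using coprime_M nd by blast
              show "0 \<le> X (i,k1)" "X (i,k1) < int p ^ 2" "0 \<le> Y (i,k1)" "Y (i,k1) < int p ^ 2"
                using Xb Yb i k1 unfolding box_def by (auto simp: PiE_def Pi_def)
            qed
            then show ?thesis using ji lk by simp
          qed
        qed
      qed
    qed
  qed
  moreover have "?f ` fib n p i y \<subseteq> ?Q \<rightarrow>\<^sub>E {0..<int p ^ 2}"
    using i by (auto simp: fib_def Dset_def box_def PiE_def Pi_def)
  ultimately have "card (fib n p i y) \<le> card (?Q \<rightarrow>\<^sub>E {0..<int p ^ 2})"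
    by (intro card_inj_on_le) (auto intro: finite_PiE)
  also have "\<dots> = (p^2) ^ (n - 1)" using k1 by (subst card_pow) auto
  finally show ?thesis .
qed


context
  fixes a :: "nat \<times> nat \<Rightarrow> int" and k0 :: nat
  assumes k0: "k0 < n" and ak0: "\<not> int p dvd a (i,k0)"
begin

lemma fib_bound:
  "norm (\<Sum>X\<in>fib n p i y. E (p^2) (Lf n a X)) \<le> (if y \<in> Good n p i a then real ((p^2) ^ (n - 1)) else 0)"
proof (cases "fib n p i y = {}")
  case True
  then show ?thesis by simp
next
  case False
  then obtain X0 where X0: "X0 \<in> fib n p i y" by blast
  have X0b: "X0 \<in> box n p" and gX0: "gr n i X0 = y" using X0 by (auto simp: fib_def Dset_def)
  show ?thesis
  proof (cases "\<exists>m<n. m \<noteq> i \<and> \<not> int p ^ 2 dvd (\<Sum>k<n. a (i,k) * X0 (m,k))")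
    case True
    then obtain m where m: "m < n" "m \<noteq> i" "\<not> int p ^ 2 dvd (\<Sum>k<n. a (i,k) * X0 (m,k))" by blast
    have "(\<Sum>k<n. X0 (m,k) * cof n i X0 k) = det_n n (upd_row i X0 (\<lambda>l. X0 (m,l)))"
      by (simp add: det_row_linear[OF i])
    also have "\<dots> = 0"
      by (rule det_eq_rows[of i n m]) (use i m in \<open>auto simp: upd_row_def\<close>)
    finally have "(\<Sum>k<n. X0 (m,k) * cof n i X0 k) = 0" .
    then have "(\<Sum>X\<in>fib n p i y. E (p^2) (Lf n a X)) = 0"
      using fib_zero[OF X0, of "\<lambda>k. X0 (m,k)" a] m by simp
    then show ?thesis by simp
  next
    case False
    have yG: "y \<in> Good n p i a"
    proof -
      have "y \<in> (({..<n} - {i}) \<times> {..<n}) \<rightarrow>\<^sub>E {0..<int p ^ 2}"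
        using X0b gX0 unfolding box_def gr_def by (auto simp: PiE_def Pi_def)
      moreover have "y (m,k) = X0 (m,k)" if "m < n" "m \<noteq> i" "k < n" for m k
        using that gX0 unfolding gr_def by auto
      ultimately show ?thesis using False unfolding Good_def by auto
    qed
    show ?thesis
    proof (cases "\<forall>k<n. int p dvd cof n i X0 k")
      case True
      then obtain t where t: "cof n i X0 k0 = int p * t" using k0 by (meson dvdE)
      let ?h = "\<lambda>k. if k = k0 then int p else 0"
      have "(\<Sum>k<n. ?h k * cof n i X0 k) = (\<Sum>k<n. if k = k0 then int p * cof n i X0 k0 else 0)"
        by (intro sum.cong) auto
      then have s1: "(\<Sum>k<n. ?h k * cof n i X0 k) = int p * cof n i X0 k0"
        using k0 by simp
      have "(\<Sum>k<n. a (i,k) * ?h k) = (\<Sum>k<n. if k = k0 then a (i,k0) * int p else 0)"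
        by (intro sum.cong) auto
      then have s2: "(\<Sum>k<n. a (i,k) * ?h k) = a (i,k0) * int p"
        using k0 by simp
      have "int p ^ 2 dvd (\<Sum>k<n. ?h k * cof n i X0 k)" using s1 t by (simp add: power2_eq_square)
      moreover have "\<not> int p ^ 2 dvd (\<Sum>k<n. a (i,k) * ?h k)"
      proof
        assume "int p ^ 2 dvd (\<Sum>k<n. a (i,k) * ?h k)"
        then have "int p * int p dvd a (i,k0) * int p" using s2 by (simp add: power2_eq_square)
        then have "int p dvd a (i,k0)" using Mpos by (simp add: mult.commute)
        with ak0 show False by simp
      qed
      ultimately have "(\<Sum>X\<in>fib n p i y. E (p^2) (Lf n a X)) = 0"
        by (rule fib_zero[OF X0])
      then show ?thesis by simp
    next
      case False
      then obtain k1 where k1: "k1 < n" "\<not> int p dvd cof n i X0 k1" by blast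
      have "norm (\<Sum>X\<in>fib n p i y. E (p^2) (Lf n a X)) \<le> (\<Sum>X\<in>fib n p i y. norm (E (p^2) (Lf n a X)))"
        by (rule norm_sum)
      also have "\<dots> = real (card (fib n p i y))" by (simp add: norm_E)
      also have "\<dots> \<le> real ((p^2) ^ (n - 1))"
        using fib_card[OF X0 k1] by linarith
      finally show ?thesis using yG by simp
    qed
  qed
qed


lemma card_Good: "card (Good n p i a) \<le> (p^2) ^ ((n - 1) * (n - 1))"
proof -
  let ?Q = "({..<n} - {i}) \<times> ({..<n} - {k0})"
  let ?f = "\<lambda>y. restrict y ?Q"
  have "inj_on ?f (Good n p i a)"
  proof (rule inj_onI)
    fix y z assume y: "y \<in> Good n p i a" and z: "z \<in> Good n p i a" and e: "?f y = ?f z"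
    show "y = z"
    proof (rule ext, clarify)
      fix m l
      show "y (m,l) = z (m,l)"
      proof (cases "m < n \<and> m \<noteq> i \<and> l < n")
        case False
        then show ?thesis using y z unfolding Good_def by (auto simp: PiE_def extensional_def)
      next
        case True
        show ?thesis
        proof (cases "l = k0")
          case False
          then show ?thesis using fun_cong[OF e, of "(m,l)"] True by auto
        next
          case lk: True
          have "(\<lambda>k. y (m,k)) k0 = (\<lambda>k. z (m,k)) k0"
          proof (rule lin_unique[where c="\<lambda>k. a (i,k)" and n=n and M="int p ^ 2"])
            show "k0 < n" by (rule k0)
            show "y (m,k) = z (m,k)" if "k < n" "k \<noteq> k0" for k
              using fun_cong[OF e, of "(m,k)"] that True by auto
            show "int p ^ 2 dvd (\<Sum>k<n. a (i,k) * y (m,k))" using y True unfolding Good_def by auto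
            show "int p ^ 2 dvd (\<Sum>k<n. a (i,k) * z (m,k))" using z True unfolding Good_def by auto
            show "coprime (a (i,k0)) (int p ^ 2)" using coprime_M ak0 by blast
            show "0 \<le> y (m,k0)" "y (m,k0) < int p ^ 2" "0 \<le> z (m,k0)" "z (m,k0) < int p ^ 2"
              using y z True k0 unfolding Good_def by (auto simp: PiE_def Pi_def)
          qed
          then show ?thesis using lk by simp
        qed
      qed
    qed
  qed
  moreover have "?f ` Good n p i a \<subseteq> ?Q \<rightarrow>\<^sub>E {0..<int p ^ 2}"
    by (auto simp: Good_def PiE_def Pi_def)
  ultimately have "card (Good n p i a) \<le> card (?Q \<rightarrow>\<^sub>E {0..<int p ^ 2})"
    by (intro card_inj_on_le) (auto intro: finite_PiE)
  also have "\<dots> = (p^2) ^ ((n - 1) * (n - 1))" using k0 i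
    by (subst card_pow) (auto simp: card_cartesian_product)
  finally show ?thesis .
qed

lemma main_bound: "norm (S_sum n p a) \<le> real ((p^2) ^ ((n - 1) * (n - 1)) * (p^2) ^ (n - 1))"
proof -
  let ?RB = "(({..<n} - {i}) \<times> {..<n}) \<rightarrow>\<^sub>E {0..<int p ^ 2}"
  let ?B = "real ((p^2) ^ (n - 1))"
  have S: "S_sum n p a = (\<Sum>X\<in>Dset n p. E (p^2) (Lf n a X))"
    by (simp add: S_sum_def Dset_def box_def E_def Lf_def)
  have finD: "finite (Dset n p)" by (rule finite_subset[OF _ finite_box[of n p]]) (auto simp: Dset_def)
  have finRB: "finite ?RB" by (intro finite_PiE) auto
  have img: "gr n i ` Dset n p \<subseteq> ?RB"
    unfolding gr_def Dset_def box_def by (auto simp: PiE_def Pi_def)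
  have "(\<Sum>X\<in>Dset n p. E (p^2) (Lf n a X)) = (\<Sum>y\<in>?RB. \<Sum>X\<in>fib n p i y. E (p^2) (Lf n a X))"
    unfolding fib_def using sum.group[OF finD finRB img, of "\<lambda>X. E (p^2) (Lf n a X)"] by simp
  then have "norm (S_sum n p a) \<le> (\<Sum>y\<in>?RB. norm (\<Sum>X\<in>fib n p i y. E (p^2) (Lf n a X)))"
    using S norm_sum by metis
  also have "\<dots> \<le> (\<Sum>y\<in>?RB. if y \<in> Good n p i a then ?B else 0)"
    by (intro sum_mono fib_bound)
  also have "\<dots> = (\<Sum>y\<in>Good n p i a. ?B)"
  proof -
    have "Good n p i a = {y \<in> ?RB. y \<in> Good n p i a}" by (auto simp: Good_def)
    then show ?thesis using sum.inter_filter[OF finRB, of "\<lambda>_. ?B" "\<lambda>y. y \<in> Good n p i a"] by simp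
  qed
  also have "\<dots> = real (card (Good n p i a)) * ?B" by simp
  also have "\<dots> \<le> real ((p^2) ^ ((n - 1) * (n - 1))) * ?B"
  proof (rule mult_right_mono)
    show "real (card (Good n p i a)) \<le> real ((p^2) ^ ((n - 1) * (n - 1)))"
      by (simp only: of_nat_le_iff) (rule card_Good)
  qed simp
  finally show ?thesis by simp
qed

end

end

theorem lemma3p6:
  fixes n :: nat
  assumes "n \<ge> 1"
  shows "\<exists>C>0. \<forall>(p::nat) (a::nat \<times> nat \<Rightarrow> int).
           prime p \<longrightarrow> (\<exists>i<n. \<exists>j<n. \<not> int p dvd a (i, j)) \<longrightarrow>
           cmod (S_sum n p a) \<le> C * real p powr (2 * real n ^ 2 - (real n + 3) / 2)"
proof (intro exI[of _ 1] conjI allI impI)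
  fix p :: nat and a :: "nat \<times> nat \<Rightarrow> int"
  assume p: "prime p" and "\<exists>i<n. \<exists>j<n. \<not> int p dvd a (i, j)"
  then obtain i j where ij: "i < n" "j < n" "\<not> int p dvd a (i, j)" by blast
  have b: "cmod (S_sum n p a) \<le> real ((p^2) ^ ((n - 1) * (n - 1)) * (p^2) ^ (n - 1))"
    by (rule main_bound[where n=n and p=p and i=i and ?k0.0=j and a=a, OF p ij])
  have p1: "real p \<ge> 1" using p prime_gt_0_nat by (simp add: Suc_le_eq)
  have e: "(p^2) ^ ((n - 1) * (n - 1)) * (p^2) ^ (n - 1) = p ^ (2 * n * (n - 1))"
  proof -
    have "2 * ((n - 1) * (n - 1)) + 2 * (n - 1) = 2 * n * (n - 1)" using assms
      by (cases n) (auto simp: algebra_simps)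
    then show ?thesis by (metis power_add power_mult)
  qed
  have "real (p ^ (2 * n * (n - 1))) = real p powr real (2 * n * (n - 1))"
  proof -
    have "real p > 0" using p prime_gt_0_nat by simp
    then show ?thesis by (metis of_nat_power powr_realpow)
  qed
  also have "\<dots> \<le> real p powr (2 * real n ^ 2 - (real n + 3) / 2)"
  proof (rule powr_mono[OF _ p1])
    have "real (n - 1) = real n - 1" using assms by (simp add: of_nat_diff)
    then have "real (2 * n * (n - 1)) = 2 * real n ^ 2 - 2 * real n"
      by (simp only: of_nat_mult) (simp add: algebra_simps power2_eq_square)
    then show "real (2 * n * (n - 1)) \<le> 2 * real n ^ 2 - (real n + 3) / 2"
      using assms by simp
  qed
  finally have c: "real (p ^ (2 * n * (n - 1))) \<le> real p powr (2 * real n ^ 2 - (real n + 3) / 2)" .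
  have "cmod (S_sum n p a) \<le> real (p ^ (2 * n * (n - 1)))" using b unfolding e .
  with c show "cmod (S_sum n p a) \<le> 1 * real p powr (2 * real n ^ 2 - (real n + 3) / 2)"
    by simp
qed simp

end
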